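(* Let $\mathscr X=[0,1]^d$ with the Euclidean norm $\|\cdot\|_2$, and let $\beta\in(0,\infty)$. For $\mathbf x\in\mathscr X$ and a finite set $\mathbf X_n\subset\mathscr X$ define $D_\beta(\mathbf x,\mathbf X_n,\mathscr X)=\min\{\min_{\mathbf x_i\in\mathbf X_n}\|\mathbf x-\mathbf x_i\|_2,\ \beta\,d(\mathbf x,\partial\mathscr X)\}$, where $d(\mathbf x,\partial\mathscr X)$ is the Euclidean distance from $\mathbf x$ to the boundary of $\mathscr X$. Let $\mathbf x_1\in\mathscr X$ and, for $n\ge1$, let $\mathbf x_{n+1}\in\mathrm{Arg}\max_{\mathbf x\in\mathscr X}D_\beta(\mathbf x,\mathbf X_n,\mathscr X)$ where $\mathbf X_n=\{\mathbf x_1,\ldots,\mathbf x_n\}$. Then for every $n\ge1$, $$\min_{1\le i\le n}\|\mathbf x_{n+1}-\mathbf x_i\|_2\ge a\,\mathsf{CR}(\mathbf X_n),\qquad a=\frac1{1+\sqrt d/\beta};$$ that is, this boundary-phobic algorithm is an instance of the relaxed greedy packing algorithm (in which $\mathbf x_{n+1}\in\mathscr X$ is any point with $\min_i\|\mathbf x_{n+1}-\mathbf x_i\|\ge\alpha_n\mathsf{CR}(\mathbf X_n)$) with $\alpha_n=a=1/(1+\sqrt d/\beta)$ for all $n$.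
   Context: Fill distance $\mathsf{CR}(\mathbf X_n)=\sup_{\mathbf x\in\mathscr X}\min_{i\le n}\|\mathbf x-\mathbf x_i\|_2$. *)

theory Defs
  imports "HOL-Analysis.Analysis"
begin

text \<open>The unit cube [0,1]^d, with d = CARD('d).\<close>
definition unit_cube :: "(real ^ 'd) set" where
  "unit_cube = {x. \<forall>i. 0 \<le> x $ i \<and> x $ i \<le> 1}"

definition min_dist :: "real ^ 'd \<Rightarrow> (real ^ 'd) set \<Rightarrow> real" where
  "min_dist x P = Min ((\<lambda>p. dist x p) ` P)"

definition D_beta :: "real \<Rightarrow> real ^ 'd \<Rightarrow> (real ^ 'd) set \<Rightarrow> real" where
  "D_beta \<beta> x P = min (min_dist x P) (\<beta> * infdist x (frontier (unit_cube :: (real ^ 'd) set)))"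

definition covering_radius :: "(real ^ 'd) set \<Rightarrow> real" where
  "covering_radius P = (SUP x\<in>(unit_cube :: (real ^ 'd) set). min_dist x P)"

end

theory Submission
  imports Defs
begin

lemma cube_eq: "(unit_cube :: (real ^ 'd::finite) set) = cbox 0 1"
  unfolding unit_cube_def by (auto simp: mem_box_cart)

lemma frontier_cube:
  "frontier (unit_cube :: (real ^ 'd::finite) set) = {x. (\<forall>i. 0 \<le> x $ i \<and> x $ i \<le> 1) \<and> (\<exists>i. x $ i = 0 \<or> x $ i = 1)}"
  unfolding cube_eq frontier_cbox
  apply (auto simp: mem_box_cart)
  apply (metis less_eq_real_def)+
  apply (metis less_irrefl)+
  done

lemma norm_axis_real: "norm (axis i (a::real) :: real ^ 'd::finite) = \<bar>a\<bar>"
proof -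
  have "(\<Sum>j\<in>UNIV. (norm ((axis i a :: real ^ 'd) $ j))\<^sup>2) = a\<^sup>2"
  proof -
    have "\<And>j. (norm ((axis i a :: real ^ 'd) $ j))\<^sup>2 = (if j = i then a\<^sup>2 else 0)"
      by (simp add: axis_def)
    then show ?thesis by simp
  qed
  then show ?thesis unfolding norm_vec_def L2_set_def by simp
qed

lemma fr_upper:
  fixes x :: "real ^ 'd::finite"
  assumes "x \<in> unit_cube"
  shows "infdist x (frontier unit_cube) \<le> x $ i \<and> infdist x (frontier unit_cube) \<le> 1 - x $ i"
proof -
  have c: "\<forall>j. 0 \<le> x $ j \<and> x $ j \<le> 1" using assms unfolding unit_cube_def by auto
  define p where "p = (\<chi> j. if j = i then 0 else x $ j)"
  define q where "q = (\<chi> j. if j = i then 1 else x $ j)"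
  have pf: "p \<in> frontier unit_cube" unfolding frontier_cube p_def using c by auto
  have qf: "q \<in> frontier unit_cube" unfolding frontier_cube q_def using c by auto
  have "dist x p = norm (x - p)" by (simp add: dist_norm)
  also have "x - p = axis i (x $ i)"
    unfolding p_def by (auto simp: vec_eq_iff axis_def)
  also have "norm \<dots> = x $ i" using c by (simp add: norm_axis_real)
  finally have 1: "dist x p = x $ i" .
  have "dist x q = norm (x - q)" by (simp add: dist_norm)
  also have "x - q = axis i (x $ i - 1)"
    unfolding q_def by (auto simp: vec_eq_iff axis_def)
  also have "norm \<dots> = 1 - x $ i" using c by (simp add: norm_axis_real)
  finally have 2: "dist x q = 1 - x $ i" .
  show ?thesis using infdist_le[OF pf, of x] infdist_le[OF qf, of x] 1 2 by simp
qed

lemma fr_lower: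
  fixes x :: "real ^ 'd::finite"
  assumes "\<forall>i. r \<le> x $ i \<and> x $ i \<le> 1 - r"
  shows "r \<le> infdist x (frontier unit_cube)"
proof -
  have ne: "frontier (unit_cube :: (real ^ 'd) set) \<noteq> {}"
  proof -
    have "(0::real^'d) \<in> frontier unit_cube" unfolding frontier_cube by auto
    then show ?thesis by auto
  qed
  have "r \<le> dist x p" if "p \<in> frontier unit_cube" for p
  proof -
    from that obtain i where i: "p $ i = 0 \<or> p $ i = 1" unfolding frontier_cube by auto
    have "\<bar>x $ i - p $ i\<bar> \<le> dist x p"
      by (metis dist_real_def dist_vec_nth_le)
    moreover have "r \<le> \<bar>x $ i - p $ i\<bar>" using i assms[rule_format, of i] by auto
    ultimately show ?thesis by simp
  qed
  then show ?thesis unfolding infdist_notempty[OF ne]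
    by (intro cINF_greatest ne) auto
qed

lemma norm_box_bound:
  fixes v :: "real ^ 'd::finite"
  assumes "\<forall>i. \<bar>v $ i\<bar> \<le> r"
  shows "norm v \<le> r * sqrt (real CARD('d))"
proof -
  have r0: "0 \<le> r" using assms by (meson abs_ge_zero order_trans)
  have "norm v = sqrt (\<Sum>i\<in>UNIV. (v $ i)\<^sup>2)"
    unfolding norm_vec_def L2_set_def by simp
  also have "\<dots> \<le> sqrt (\<Sum>i\<in>(UNIV::'d set). r\<^sup>2)"
  proof (intro real_sqrt_le_mono sum_mono)
    fix i show "(v $ i)\<^sup>2 \<le> r\<^sup>2" using assms[rule_format, of i]
      by (metis abs_le_square_iff abs_of_nonneg r0)
  qed
  also have "\<dots> = sqrt (r\<^sup>2 * real CARD('d))" by (simp add: mult.commute)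
  also have "\<dots> = r * sqrt (real CARD('d))" using r0 by (simp add: real_sqrt_mult)
  finally show ?thesis .
qed

lemma md_lip:
  fixes y z :: "real ^ 'd::finite"
  assumes "finite P" "P \<noteq> {}"
  shows "min_dist y P \<le> min_dist z P + dist y z"
proof -
  have "Min ((\<lambda>p. dist z p) ` P) \<in> (\<lambda>p. dist z p) ` P"
    using assms by (intro Min_in) auto
  then obtain p where p: "p \<in> P" "min_dist z P = dist z p"
    unfolding min_dist_def by auto
  have "min_dist y P \<le> dist y p" unfolding min_dist_def using assms p by (intro Min_le) auto
  also have "\<dots> \<le> dist y z + dist z p" by (rule dist_triangle)
  finally show ?thesis using p by simp
qed

lemma md_nonneg:
  fixes z :: "real ^ 'd::finite"
  assumes "finite P" "P \<noteq> {}"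
  shows "0 \<le> min_dist z P"
proof -
  have "Min ((\<lambda>p. dist z p) ` P) \<in> (\<lambda>p. dist z p) ` P"
    using assms by (intro Min_in) auto
  then show ?thesis unfolding min_dist_def by auto
qed

theorem theorem7:
  fixes \<beta> :: real and xs :: "nat \<Rightarrow> real ^ 'd::finite"
  assumes beta_pos: "\<beta> > 0"
    and x1: "xs 1 \<in> unit_cube"
    and greedy: "\<And>n. n \<ge> 1 \<Longrightarrow> xs (n + 1) \<in> unit_cube \<and>
        (\<forall>y\<in>unit_cube. D_beta \<beta> y (xs ` {1..n}) \<le> D_beta \<beta> (xs (n + 1)) (xs ` {1..n}))"
  shows "\<forall>n\<ge>1. min_dist (xs (n + 1)) (xs ` {1..n})
           \<ge> (1 / (1 + sqrt (real CARD('d)) / \<beta>)) * covering_radius (xs ` {1..n})"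
proof (intro allI impI)
  fix n :: nat assume n1: "n \<ge> 1"
  define P where "P = xs ` {1..n}"
  define xn where "xn = xs (n + 1)"
  define F where "F = frontier (unit_cube :: (real ^ 'd) set)"
  define m where "m = min_dist xn P"
  define \<delta> where "\<delta> = D_beta \<beta> xn P"
  define s where "s = sqrt (real CARD('d))"
  have fin: "finite P" "P \<noteq> {}" unfolding P_def using n1 by auto
  have xnc: "xn \<in> unit_cube" using greedy[OF n1] unfolding xn_def by auto
  have gr: "\<And>y. y \<in> unit_cube \<Longrightarrow> D_beta \<beta> y P \<le> \<delta>"
    using greedy[OF n1] unfolding \<delta>_def P_def xn_def by auto
  have s0: "s \<ge> 0" unfolding s_def by simp
  have \<delta>m: "\<delta> \<le> m" unfolding \<delta>_def m_def D_beta_def by simp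
  have \<delta>h: "\<delta> \<le> \<beta> * infdist xn F" unfolding \<delta>_def F_def D_beta_def by simp
  define r where "r = \<delta> / \<beta>"
  have rh: "r \<le> infdist xn F" unfolding r_def using \<delta>h beta_pos by (simp add: divide_le_eq mult.commute)
  have rhalf: "r \<le> 1/2"
  proof -
    have "infdist xn F \<le> xn $ undefined" "infdist xn F \<le> 1 - xn $ undefined"
      using fr_upper[OF xnc] unfolding F_def by auto
    then show ?thesis using rh by linarith
  qed
  have key: "min_dist y P \<le> m + r * s" if yc: "y \<in> unit_cube" for y
  proof (cases "r < 1/2")
    case True
    show ?thesis
    proof (rule field_le_epsilon)
      fix e :: real assume e0: "e > 0"
      define r' where "r' = min ((r + 1/2)/2) (r + e / (s + 1))"
      have rr': "r < r'" using True e0 s0 unfolding r'_def by auto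
      have "r' \<le> (r + 1/2)/2" unfolding r'_def by (rule min.cobounded1)
      hence r'h: "r' < 1/2" using True by - (rule le_less_trans, assumption, simp)
      have r'e: "r' * s \<le> r * s + e"
      proof -
        have "r' \<le> r + e / (s + 1)" unfolding r'_def by simp
        hence "r' * s \<le> (r + e / (s+1)) * s" using s0 by (simp add: mult_right_mono)
        also have "\<dots> = r * s + e * (s / (s+1))" using s0 by (simp add: field_simps)
        also have "\<dots> \<le> r * s + e * 1" using s0 e0 by (intro add_left_mono mult_left_mono) auto
        finally show ?thesis by simp
      qed
      define z where "z = (\<chi> i. max r' (min (1 - r') (y $ i)))"
      have zi: "\<forall>i. r' \<le> z $ i \<and> z $ i \<le> 1 - r'" unfolding z_def using r'h by auto
      have yi: "\<forall>i. 0 \<le> y $ i \<and> y $ i \<le> 1" using yc unfolding unit_cube_def by auto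
      have zc: "z \<in> unit_cube" unfolding unit_cube_def mem_Collect_eq z_def vec_lambda_beta
      proof (intro allI)
        fix i show "0 \<le> max r' (min (1 - r') (y $ i)) \<and> max r' (min (1 - r') (y $ i)) \<le> 1"
          using yi[rule_format, of i] r'h by (auto simp: max_def min_def)
      qed
      have "r' \<le> infdist z F" unfolding F_def by (rule fr_lower[OF zi])
      hence "\<delta> < \<beta> * infdist z F" using rr' beta_pos unfolding r_def
        by (smt (verit, best) mult.commute mult_strict_left_mono nonzero_mult_div_cancel_left pos_less_divide_eq)
      moreover have "D_beta \<beta> z P \<le> \<delta>" using gr[OF zc] .
      ultimately have mz: "min_dist z P \<le> m" using \<delta>m unfolding D_beta_def F_def by linarith
      have \<delta>0: "0 \<le> \<delta>" unfolding \<delta>_def D_beta_def using md_nonneg[OF fin] beta_pos infdist_nonneg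
        by (simp add: xn_def less_imp_le infdist_nonneg)
      hence "0 \<le> r" unfolding r_def using beta_pos by simp
      have "\<forall>i. \<bar>(y - z) $ i\<bar> \<le> r'"
      proof
        fix i show "\<bar>(y - z) $ i\<bar> \<le> r'" unfolding z_def
          using yi[rule_format, of i] r'h rr' \<open>0 \<le> r\<close> by (auto simp: max_def min_def)
      qed
      hence "dist y z \<le> r' * s" unfolding dist_norm s_def by (rule norm_box_bound)
      with md_lip[OF fin, of y z] mz r'e show "min_dist y P \<le> m + r * s + e" by linarith
    qed
  next
    case False
    hence r2: "r = 1/2" using rhalf by simp
    have xi: "\<forall>i. xn $ i = 1/2"
    proof
      fix i show "xn $ i = 1/2"
        using fr_upper[OF xnc, of i] rh r2 unfolding F_def by linarith
    qed
    have yi: "\<forall>i. 0 \<le> y $ i \<and> y $ i \<le> 1" using yc unfolding unit_cube_def by auto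
    have "\<forall>i. \<bar>(y - xn) $ i\<bar> \<le> r"
    proof
      fix i show "\<bar>(y - xn) $ i\<bar> \<le> r" using xi[rule_format, of i] yi[rule_format, of i] r2 by auto
    qed
    hence "dist y xn \<le> r * s" unfolding dist_norm s_def by (rule norm_box_bound)
    with md_lip[OF fin, of y xn] show ?thesis unfolding m_def by linarith
  qed
  have rs: "r * s \<le> m * (s / \<beta>)"
  proof -
    have "r * s = \<delta> * (s / \<beta>)" unfolding r_def by simp
    also have "\<dots> \<le> m * (s / \<beta>)" using \<delta>m s0 beta_pos by (intro mult_right_mono) auto
    finally show ?thesis .
  qed
  have cne: "(unit_cube :: (real ^ 'd) set) \<noteq> {}" using xnc by auto
  have CR: "covering_radius P \<le> m * (1 + s / \<beta>)"
    unfolding covering_radius_def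
  proof (rule cSUP_least[OF cne])
    fix y :: "real ^ 'd" assume "y \<in> unit_cube"
    from key[OF this] rs show "min_dist y P \<le> m * (1 + s / \<beta>)" by (simp add: algebra_simps)
  qed
  have pos: "1 + s / \<beta> > 0" using s0 beta_pos by (simp add: add_pos_nonneg)
  have "(1 / (1 + s / \<beta>)) * covering_radius P \<le> (1 / (1 + s / \<beta>)) * (m * (1 + s / \<beta>))"
    using CR pos by (intro mult_left_mono) auto
  also have "\<dots> = m" using pos by simp
  finally show "min_dist (xs (n + 1)) (xs ` {1..n})
           \<ge> (1 / (1 + sqrt (real CARD('d)) / \<beta>)) * covering_radius (xs ` {1..n})"
    unfolding m_def xn_def P_def s_def by simp
qed

end
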